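(* Let $\mathcal{W}\subset\mathbb{R}^2$ be open with conformal metric $g=\lambda(x,y)(dx^2+dy^2)$, $\lambda>0$, and let $f:\mathbb{R}\to(0,\infty)$ be smooth. A graph $z=z(x,y)$ in $\mathcal{W}\times_f\mathbb{R}$ (metric $f(z)g+dz^2$), oriented by the upward unit normal, has extrinsic curvature $K_{\rm ext}$ if and only if $z$ satisfies $Ar+2Bs+Ct+rt-s^2=E$, where $p=z_x,q=z_y,r=z_{xx},s=z_{xy},t=z_{yy}$ and $A=\frac{p\lambda_x}{2\lambda}-\frac{q\lambda_y}{2\lambda}-\frac{q^2f'}{f}-\frac{f'}{2}\lambda$, $B=\frac{p\lambda_y}{2\lambda}+\frac{q\lambda_x}{2\lambda}+\frac{pqf'}{f}$, $C=-\frac{p\lambda_x}{2\lambda}+\frac{q\lambda_y}{2\lambda}-\frac{p^2f'}{f}-\frac{f'}{2}\lambda$, $E=K_{\rm ext}(f\lambda+p^2+q^2)^2-AC+B^2$, with $f,f'$ evaluated at $z$ and $\lambda$ at $(x,y)$. In particular $AC-B^2+E=K_{\rm ext}(f\lambda+p^2+q^2)^2$, so the equation is elliptic when $K_{\rm ext}>0$.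
   Context: Extrinsic curvature $K_{\rm ext}=\det(II)/\det(I)$ for the graph in the warped product Riemannian 3-manifold. *)

theory Defs
  imports "HOL-Analysis.Analysis"
begin

definition pd :: "('a::real_normed_vector \<Rightarrow> 'b::real_normed_vector) \<Rightarrow> 'a \<Rightarrow> 'a \<Rightarrow> 'b" where
  "pd F u v = vector_derivative (\<lambda>h. F (u + h *\<^sub>R v)) (at 0)"

text \<open>Iterated partial derivatives along a list of directions (innermost = last).\<close>
fun iter_pd :: "'a::real_normed_vector list \<Rightarrow> ('a \<Rightarrow> 'b::real_normed_vector) \<Rightarrow> 'a \<Rightarrow> 'b" where
  "iter_pd [] F = F"
| "iter_pd (v # vs) F = (\<lambda>u. pd (iter_pd vs F) u v)"

definition Ck_on :: "nat \<Rightarrow> 'a::euclidean_space set \<Rightarrow> ('a \<Rightarrow> 'b::real_normed_vector) \<Rightarrow> bool" where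
  "Ck_on k S F \<longleftrightarrow>
     (\<forall>vs. set vs \<subseteq> Basis \<and> length vs \<le> k \<longrightarrow> continuous_on S (iter_pd vs F)) \<and>
     (\<forall>vs. set vs \<subseteq> Basis \<and> length vs < k \<longrightarrow>
        (\<forall>v\<in>Basis. \<forall>u\<in>S. ((\<lambda>h. iter_pd vs F (u + h *\<^sub>R v)) has_vector_derivative iter_pd (v # vs) F u) (at 0)))"

definition smooth_on :: "'a::euclidean_space set \<Rightarrow> ('a \<Rightarrow> 'b::real_normed_vector) \<Rightarrow> bool" where
  "smooth_on S F \<longleftrightarrow> (\<forall>k. Ck_on k S F)"

text \<open>A Riemannian metric on (an open set of) R^3 in coordinates: u \<mapsto> matrix (g_ij(u)).\<close>
definition metric_inner :: "real^3^3 \<Rightarrow> real^3 \<Rightarrow> real^3 \<Rightarrow> real" where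
  "metric_inner M a b = a \<bullet> (M *v b)"

text \<open>Christoffel symbols of the Levi-Civita connection: christoffel G u k i j = Gamma^k_ij(u).\<close>
definition christoffel :: "(real^3 \<Rightarrow> real^3^3) \<Rightarrow> real^3 \<Rightarrow> 3 \<Rightarrow> 3 \<Rightarrow> 3 \<Rightarrow> real" where
  "christoffel G u k i j = (1/2) * (\<Sum>l\<in>UNIV. matrix_inv (G u) $ k $ l *
      (pd (\<lambda>v. G v $ j $ l) u (axis i 1) + pd (\<lambda>v. G v $ i $ l) u (axis j 1)
       - pd (\<lambda>v. G v $ i $ j) u (axis l 1)))"

definition covd_tangent :: "(real^3 \<Rightarrow> real^3^3) \<Rightarrow> (real^2 \<Rightarrow> real^3) \<Rightarrow> real^2 \<Rightarrow> 2 \<Rightarrow> 2 \<Rightarrow> real^3" where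
  "covd_tangent G X w i j =
     pd (\<lambda>w'. pd X w' (axis j 1)) w (axis i 1)
     + (\<chi> k. \<Sum>a\<in>UNIV. \<Sum>b\<in>UNIV. christoffel G (X w) k a b * (pd X w (axis i 1) $ a) * (pd X w (axis j 1) $ b))"

definition upward_normal :: "(real^3 \<Rightarrow> real^3^3) \<Rightarrow> (real^2 \<Rightarrow> real^3) \<Rightarrow> real^2 \<Rightarrow> real^3" where
  "upward_normal G X w = (THE N.
      metric_inner (G (X w)) N (pd X w (axis 1 1)) = 0 \<and>
      metric_inner (G (X w)) N (pd X w (axis 2 1)) = 0 \<and>
      metric_inner (G (X w)) N N = 1 \<and> N $ 3 > 0)"

definition first_ff :: "(real^3 \<Rightarrow> real^3^3) \<Rightarrow> (real^2 \<Rightarrow> real^3) \<Rightarrow> real^2 \<Rightarrow> real^2^2" where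
  "first_ff G X w = (\<chi> i j. metric_inner (G (X w)) (pd X w (axis i 1)) (pd X w (axis j 1)))"

definition second_ff :: "(real^3 \<Rightarrow> real^3^3) \<Rightarrow> (real^2 \<Rightarrow> real^3) \<Rightarrow> real^2 \<Rightarrow> real^2^2" where
  "second_ff G X w = (\<chi> i j. metric_inner (G (X w)) (covd_tangent G X w i j) (upward_normal G X w))"

definition extrinsic_curvature :: "(real^3 \<Rightarrow> real^3^3) \<Rightarrow> (real^2 \<Rightarrow> real^3) \<Rightarrow> real^2 \<Rightarrow> real" where
  "extrinsic_curvature G X w = det (second_ff G X w) / det (first_ff G X w)"

definition warped_metric :: "(real^2 \<Rightarrow> real) \<Rightarrow> (real \<Rightarrow> real) \<Rightarrow> real^3 \<Rightarrow> real^3^3" where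
  "warped_metric lam f u = (\<chi> i j. if i = j then (if i = 3 then 1 else f (u $ 3) * lam (vector [u $ 1, u $ 2])) else 0)"

definition graph_map :: "(real^2 \<Rightarrow> real) \<Rightarrow> real^2 \<Rightarrow> real^3" where
  "graph_map z w = vector [w $ 1, w $ 2, z w]"

end

theory Submission
  imports Defs
begin


lemma vec3_eq: "(vector [x, y, t] :: real^3) = x *\<^sub>R axis 1 1 + y *\<^sub>R axis 2 1 + t *\<^sub>R axis 3 1"
  by (simp add: vec_eq_iff forall_3 axis_def)

lemma vec3_deriv:
  assumes "(f1 has_vector_derivative a) (at x within s)" "(f2 has_vector_derivative b) (at x within s)" "(f3 has_vector_derivative c) (at x within s)"
  shows "((\<lambda>h. vector [f1 h, f2 h, f3 h] :: real^3) has_vector_derivative vector [a, b, c]) (at x within s)"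
proof -
  have "((\<lambda>h. f1 h *\<^sub>R axis 1 1 + f2 h *\<^sub>R axis 2 1 + f3 h *\<^sub>R axis 3 1 :: real^3) has_vector_derivative
       a *\<^sub>R axis 1 1 + b *\<^sub>R axis 2 1 + c *\<^sub>R axis 3 1) (at x within s)"
    using assms unfolding has_real_derivative_iff_has_vector_derivative[symmetric]
    by (intro has_vector_derivative_add) (auto intro!: has_vector_derivative_scaleR[THEN has_vector_derivative_eq_rhs])
  then show ?thesis by (simp add: vec3_eq)
qed

lemma comp_deriv: "((\<lambda>h. (u + h *\<^sub>R v) $ k) has_vector_derivative ((v::real^'n) $ k)) (at x within s)"
proof -
  have "((\<lambda>h. u $ k + h * v $ k) has_vector_derivative (0 + 1 * v $ k)) (at x within s)"
    by (intro has_vector_derivative_add has_vector_derivative_const)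
      (auto simp add: has_real_derivative_iff_has_vector_derivative[symmetric] intro!: derivative_eq_intros)
  then show ?thesis by simp
qed

lemma pd_graph:
  assumes "((\<lambda>h. z (u + h *\<^sub>R v)) has_vector_derivative D) (at 0)"
  shows "pd (graph_map z) u v = vector [v $ 1, v $ 2, D]"
  unfolding pd_def graph_map_def
  by (rule vector_derivative_at, rule vec3_deriv[OF comp_deriv comp_deriv assms])

lemma open_line: fixes w v :: "'a::real_normed_vector" shows "open W \<Longrightarrow> open ((\<lambda>h::real. w + h *\<^sub>R v) -` W)"
  by (rule continuous_open_vimage) (auto intro!: continuous_intros)

lemma pd_pd_graph:
  assumes W: "open W" and w: "w \<in> W"
    and zd: "\<And>u. u \<in> W \<Longrightarrow> ((\<lambda>h. z (u + h *\<^sub>R vj)) has_vector_derivative pd z u vj) (at 0)"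
    and D: "((\<lambda>h. pd z (w + h *\<^sub>R vi) vj) has_vector_derivative D) (at 0)"
  shows "pd (\<lambda>w'. pd (graph_map z) w' vj) w vi = vector [0, 0, D]"
proof -
  let ?S = "(\<lambda>h::real. w + h *\<^sub>R vi) -` W"
  have S: "open ?S" "0 \<in> ?S" using open_line[OF W] w by auto
  have 1: "((\<lambda>h. vector [vj $ 1, vj $ 2, pd z (w + h *\<^sub>R vi) vj] :: real^3) has_vector_derivative vector [0, 0, D]) (at 0)"
    by (rule vec3_deriv[OF has_vector_derivative_const has_vector_derivative_const D])
  have "((\<lambda>h. pd (graph_map z) (w + h *\<^sub>R vi) vj) has_vector_derivative vector [0, 0, D]) (at 0)"
    by (rule has_vector_derivative_transform_within_open[OF 1 S]) (simp add: pd_graph[OF zd])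
  then show ?thesis unfolding pd_def[of "\<lambda>w'. pd (graph_map z) w' vj"] by (rule vector_derivative_at)
qed

lemma vec2_line1: "vector [(vector [w $ 1, w $ 2, t] + h *\<^sub>R axis 1 1 :: real^3) $ 1,
   (vector [w $ 1, w $ 2, t] + h *\<^sub>R axis 1 1 :: real^3) $ 2] = (w::real^2) + h *\<^sub>R axis 1 1"
  by (simp add: vec_eq_iff forall_2 axis_def)
lemma vec2_line2: "vector [(vector [w $ 1, w $ 2, t] + h *\<^sub>R axis 2 1 :: real^3) $ 1,
   (vector [w $ 1, w $ 2, t] + h *\<^sub>R axis 2 1 :: real^3) $ 2] = (w::real^2) + h *\<^sub>R axis 2 1"
  by (simp add: vec_eq_iff forall_2 axis_def)
lemma vec2_line3: "vector [(vector [w $ 1, w $ 2, t] + h *\<^sub>R axis 3 1 :: real^3) $ 1,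
   (vector [w $ 1, w $ 2, t] + h *\<^sub>R axis 3 1 :: real^3) $ 2] = (w::real^2)"
  by (simp add: vec_eq_iff forall_2 axis_def)

lemma pd_metric:
  assumes lx: "((\<lambda>h. lam (w + h *\<^sub>R axis 1 1)) has_vector_derivative Lx) (at 0)"
    and ly: "((\<lambda>h. lam (w + h *\<^sub>R axis 2 1)) has_vector_derivative Ly) (at 0)"
    and fd: "(f has_real_derivative Fp) (at (z w))"
  shows "pd (\<lambda>v. warped_metric lam f v $ j $ l) (graph_map z w) (axis i 1) =
    (if j = l \<and> j \<noteq> 3 then (if i = 1 then f (z w) * Lx else if i = 2 then f (z w) * Ly else Fp * lam w) else 0)"
proof (cases "j = l \<and> j \<noteq> 3")
  case False
  then have e: "(\<lambda>h. warped_metric lam f (graph_map z w + h *\<^sub>R axis i 1) $ j $ l) = (\<lambda>h. if j = l then 1 else 0)"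
    by (auto simp: warped_metric_def)
  show ?thesis using False unfolding pd_def e
    by (auto intro!: vector_derivative_at)
next
  case True
  then have e: "(\<lambda>h. warped_metric lam f (graph_map z w + h *\<^sub>R axis i 1) $ j $ l) =
     (\<lambda>h. f ((graph_map z w + h *\<^sub>R axis i 1) $ 3) * lam (vector [(graph_map z w + h *\<^sub>R axis i 1) $ 1, (graph_map z w + h *\<^sub>R axis i 1) $ 2]))"
    by (auto simp: warped_metric_def)
  have "i = 1 \<or> i = 2 \<or> i = 3" using exhaust_3 by blast
  moreover
  { assume i: "i = 1"
    have e2: "(\<lambda>h. f ((graph_map z w + h *\<^sub>R axis i 1) $ 3) * lam (vector [(graph_map z w + h *\<^sub>R axis i 1) $ 1, (graph_map z w + h *\<^sub>R axis i 1) $ 2]))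
      = (\<lambda>h. f (z w) * lam (w + h *\<^sub>R axis 1 1))"
      unfolding i graph_map_def vec2_line1 by (simp add: axis_def)
    have "((\<lambda>h. f (z w) * lam (w + h *\<^sub>R axis 1 1)) has_real_derivative f (z w) * Lx) (at 0)"
      using lx unfolding has_real_derivative_iff_has_vector_derivative[symmetric] by (rule DERIV_cmult)
    then have ?thesis using True i unfolding pd_def e e2
      by (auto intro!: vector_derivative_at simp: has_real_derivative_iff_has_vector_derivative) }
  moreover
  { assume i: "i = 2"
    have e2: "(\<lambda>h. f ((graph_map z w + h *\<^sub>R axis i 1) $ 3) * lam (vector [(graph_map z w + h *\<^sub>R axis i 1) $ 1, (graph_map z w + h *\<^sub>R axis i 1) $ 2]))
      = (\<lambda>h. f (z w) * lam (w + h *\<^sub>R axis 2 1))"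
      unfolding i graph_map_def vec2_line2 by (simp add: axis_def)
    have "((\<lambda>h. f (z w) * lam (w + h *\<^sub>R axis 2 1)) has_real_derivative f (z w) * Ly) (at 0)"
      using ly unfolding has_real_derivative_iff_has_vector_derivative[symmetric] by (rule DERIV_cmult)
    then have ?thesis using True i unfolding pd_def e e2
      by (auto intro!: vector_derivative_at simp: has_real_derivative_iff_has_vector_derivative) }
  moreover
  { assume i: "i = 3"
    have e2: "(\<lambda>h. f ((graph_map z w + h *\<^sub>R axis i 1) $ 3) * lam (vector [(graph_map z w + h *\<^sub>R axis i 1) $ 1, (graph_map z w + h *\<^sub>R axis i 1) $ 2]))
      = (\<lambda>h. f (h + z w) * lam w)"
      unfolding i graph_map_def vec2_line3 by (simp add: axis_def add.commute)
    have "((\<lambda>h. f (h + z w)) has_real_derivative Fp) (at 0)"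
      using fd DERIV_shift[of f Fp 0 "z w"] by simp
    then have "((\<lambda>h. f (h + z w) * lam w) has_real_derivative Fp * lam w) (at 0)"
      by (rule DERIV_cmult_right)
    then have ?thesis using True i unfolding pd_def e e2
      by (auto intro!: vector_derivative_at simp: has_real_derivative_iff_has_vector_derivative) }
  ultimately show ?thesis by blast
qed

lemma minv_diag:
  assumes "(a::real) \<noteq> 0"
  shows "matrix_inv (\<chi> i j. if i = j then (if i = (3::3) then 1 else a) else 0 :: real^3^3) =
         (\<chi> i j. if i = j then (if i = 3 then 1 else 1/a) else 0)"
proof -
  let ?A = "(\<chi> i j. if i = j then (if i = (3::3) then 1 else a) else 0 :: real^3^3)"
  let ?B = "(\<chi> i j. if i = j then (if i = (3::3) then 1 else 1/a) else 0 :: real^3^3)"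
  have AB: "?A ** ?B = mat 1" "?B ** ?A = mat 1"
    using assms by (simp_all add: vec_eq_iff matrix_matrix_mult_def sum_3 mat_def forall_3)
  show ?thesis unfolding matrix_inv_def
  proof (rule someI2[of _ ?B])
    show "?A ** ?B = mat 1 \<and> ?B ** ?A = mat 1" using AB by simp
  next
    fix A' assume h: "?A ** A' = mat 1 \<and> A' ** ?A = mat 1"
    have "A' = A' ** (?A ** ?B)" using AB by (simp add: matrix_mul_rid)
    also have "\<dots> = (A' ** ?A) ** ?B" by (simp add: matrix_mul_assoc)
    also have "\<dots> = ?B" using h by (simp add: matrix_mul_lid)
    finally show "A' = ?B" .
  qed
qed

lemma normal_eq:
  fixes M :: "real^3^3"
  assumes a: "a > 0" and M: "M = (\<chi> i j. if i = j then (if i = (3::3) then 1 else a) else 0)"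
  shows "(THE N. metric_inner M N (vector [1, 0, p]) = 0 \<and> metric_inner M N (vector [0, 1, q]) = 0 \<and>
      metric_inner M N N = 1 \<and> N $ 3 > 0) =
    vector [- p / (a * sqrt (1 + (p\<^sup>2 + q\<^sup>2) / a)), - q / (a * sqrt (1 + (p\<^sup>2 + q\<^sup>2) / a)), 1 / sqrt (1 + (p\<^sup>2 + q\<^sup>2) / a)]"
proof -
  let ?P = "\<lambda>N. metric_inner M N (vector [1, 0, p]) = 0 \<and> metric_inner M N (vector [0, 1, q]) = 0 \<and>
      metric_inner M N N = 1 \<and> N $ 3 > 0"
  define S where "S = 1 + (p\<^sup>2 + q\<^sup>2) / a"
  have S: "S > 0" using a by (simp add: S_def add_pos_nonneg)
  define N0 :: "real^3" where "N0 = vector [- p / (a * sqrt S), - q / (a * sqrt S), 1 / sqrt S]"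
  have c1: "N0 $ 1 = - p / (a * sqrt S)" "N0 $ 2 = - q / (a * sqrt S)" "N0 $ 3 = 1 / sqrt S"
    by (simp_all add: N0_def)
  have sS: "sqrt S > 0" using S by simp
  have P: "?P N0"
  proof (intro conjI)
    show "metric_inner M N0 (vector [1, 0, p]) = 0" using a sS
      by (simp add: M metric_inner_def inner_vec_def matrix_vector_mult_def sum_3 c1 field_simps)
    show "metric_inner M N0 (vector [0, 1, q]) = 0" using a sS
      by (simp add: M metric_inner_def inner_vec_def matrix_vector_mult_def sum_3 c1 field_simps)
    have "metric_inner M N0 N0 = a * (N0 $ 1)\<^sup>2 + a * (N0 $ 2)\<^sup>2 + (N0 $ 3)\<^sup>2"
      by (simp add: M metric_inner_def inner_vec_def matrix_vector_mult_def sum_3 power2_eq_square algebra_simps)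
    also have "\<dots> = (p\<^sup>2 + q\<^sup>2 + a) / (a * S)" unfolding c1 using a sS
      by (simp add: power_divide field_simps power2_eq_square)
    also have "\<dots> = 1"
    proof -
      have "a * S = p\<^sup>2 + q\<^sup>2 + a" using a unfolding S_def by (simp add: field_simps)
      moreover have "p\<^sup>2 + q\<^sup>2 + a > 0" using a by (simp add: add_nonneg_pos)
      ultimately show ?thesis by simp
    qed
    finally show "metric_inner M N0 N0 = 1" .
    show "N0 $ 3 > 0" using sS c1 by simp
  qed
  have U: "N = N0" if h: "?P N" for N
  proof -
    have e1: "a * N $ 1 + p * N $ 3 = 0" and e2: "a * N $ 2 + q * N $ 3 = 0"
      and e3: "a * (N $ 1)\<^sup>2 + a * (N $ 2)\<^sup>2 + (N $ 3)\<^sup>2 = 1" and pos: "N $ 3 > 0"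
      using h by (simp_all add: M metric_inner_def inner_vec_def matrix_vector_mult_def sum_3 algebra_simps power2_eq_square)
    have n1: "N $ 1 = - p * N $ 3 / a" using e1 a by (simp add: field_simps)
    have n2: "N $ 2 = - q * N $ 3 / a" using e2 a by (simp add: field_simps)
    have "(N $ 3)\<^sup>2 * S = 1" using e3 a unfolding n1 n2 S_def by (simp add: field_simps power2_eq_square)
    then have "(N $ 3)\<^sup>2 = (1 / sqrt S)\<^sup>2" using S by (simp add: field_simps power_divide)
    then have "N $ 3 = 1 / sqrt S \<or> N $ 3 = - (1 / sqrt S)" by (simp add: power2_eq_iff)
    moreover have "1 / sqrt S > 0" using S by simp
    ultimately have n3: "N $ 3 = 1 / sqrt S" using pos by linarith
    show "N = N0" by (simp add: vec_eq_iff forall_3 n1 n2 n3 c1)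
  qed
  have "(THE N. ?P N) = N0" by (rule the_equality[of ?P, OF P U])
  then show ?thesis by (simp add: N0_def S_def)
qed

lemma line_deriv:
  fixes g :: "'a::real_normed_vector \<Rightarrow> real"
  assumes "((\<lambda>t. g ((c + x *\<^sub>R v) + t *\<^sub>R v)) has_vector_derivative D) (at 0)"
  shows "((\<lambda>s. g (c + s *\<^sub>R v)) has_real_derivative D) (at x)"
proof -
  have e: "(\<lambda>t. g ((c + x *\<^sub>R v) + t *\<^sub>R v)) = (\<lambda>t. g (c + (t + x) *\<^sub>R v))"
    by (simp add: algebra_simps scaleR_add_left)
  have "((\<lambda>t. g (c + (t + x) *\<^sub>R v)) has_real_derivative D) (at 0)"
    using assms unfolding e has_real_derivative_iff_has_vector_derivative .
  then have "((\<lambda>s. g (c + s *\<^sub>R v)) has_real_derivative D) (at (0 + x))"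
    using DERIV_shift[of "\<lambda>s. g (c + s *\<^sub>R v)" D 0 x] by simp
  then show ?thesis by simp
qed

lemma clairaut:
  fixes z Zx Zy Zxy Zyx :: "'a::real_normed_vector \<Rightarrow> real"
  assumes W: "open W" and w: "w \<in> W"
    and zx: "\<And>u. u \<in> W \<Longrightarrow> ((\<lambda>h. z (u + h *\<^sub>R a)) has_vector_derivative Zx u) (at 0)"
    and zy: "\<And>u. u \<in> W \<Longrightarrow> ((\<lambda>h. z (u + h *\<^sub>R b)) has_vector_derivative Zy u) (at 0)"
    and zxy: "\<And>u. u \<in> W \<Longrightarrow> ((\<lambda>h. Zx (u + h *\<^sub>R b)) has_vector_derivative Zxy u) (at 0)"
    and zyx: "\<And>u. u \<in> W \<Longrightarrow> ((\<lambda>h. Zy (u + h *\<^sub>R a)) has_vector_derivative Zyx u) (at 0)"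
    and c1: "continuous_on W Zxy" and c2: "continuous_on W Zyx"
  shows "Zxy w = Zyx w"
proof (rule ccontr)
  assume ne: "Zxy w \<noteq> Zyx w"
  define e where "e = \<bar>Zxy w - Zyx w\<bar> / 2"
  have e0: "e > 0" using ne by (simp add: e_def)
  obtain d1 where d1: "d1 > 0" "ball w d1 \<subseteq> W" using W w open_contains_ball by blast
  have "continuous (at w) Zxy" using c1 W w continuous_on_eq_continuous_at by blast
  then obtain d2 where d2: "d2 > 0" "\<And>u. dist u w < d2 \<Longrightarrow> dist (Zxy u) (Zxy w) < e"
    using e0 continuous_at_eps_delta by blast
  have "continuous (at w) Zyx" using c2 W w continuous_on_eq_continuous_at by blast
  then obtain d3 where d3: "d3 > 0" "\<And>u. dist u w < d3 \<Longrightarrow> dist (Zyx u) (Zyx w) < e"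
    using e0 continuous_at_eps_delta by blast
  define d where "d = min d1 (min d2 d3)"
  have d0: "d > 0" using d1 d2 d3 by (simp add: d_def)
  define h where "h = d / (2 * (norm a + norm b + 1))"
  have ab: "norm a + norm b + 1 > 0" using norm_ge_zero[of a] norm_ge_zero[of b] by linarith
  have h0: "h > 0" unfolding h_def using d0 ab by simp
  have close: "dist (w + x *\<^sub>R a + y *\<^sub>R b) w < d" if "0 \<le> x" "x \<le> h" "0 \<le> y" "y \<le> h" for x y
  proof -
    have "dist (w + x *\<^sub>R a + y *\<^sub>R b) w = norm (x *\<^sub>R a + y *\<^sub>R b)" by (simp add: dist_norm)
    also have "\<dots> \<le> x * norm a + y * norm b"
      using that norm_triangle_ineq[of "x *\<^sub>R a" "y *\<^sub>R b"] by simp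
    also have "\<dots> \<le> h * norm a + h * norm b"
      using that by (intro add_mono mult_right_mono) auto
    also have "\<dots> < d"
    proof -
      have "h * (norm a + norm b + 1) = d / 2" using d0 ab by (simp add: h_def field_simps)
      then show ?thesis using d0 h0 by (simp add: algebra_simps)
    qed
    finally show ?thesis .
  qed
  have inW: "w + x *\<^sub>R a + y *\<^sub>R b \<in> W" if "0 \<le> x" "x \<le> h" "0 \<le> y" "y \<le> h" for x y
    using close[OF that] d1 by (auto simp: d_def dist_commute)
  have cx: "dist (Zxy (w + x *\<^sub>R a + y *\<^sub>R b)) (Zxy w) < e" if "0 \<le> x" "x \<le> h" "0 \<le> y" "y \<le> h" for x y
    using close[OF that] d2 by (auto simp: d_def)
  have cy: "dist (Zyx (w + x *\<^sub>R a + y *\<^sub>R b)) (Zyx w) < e" if "0 \<le> x" "x \<le> h" "0 \<le> y" "y \<le> h" for x y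
    using close[OF that] d3 by (auto simp: d_def)
  define D where "D = z (w + h *\<^sub>R a + h *\<^sub>R b) - z (w + h *\<^sub>R a) - z (w + h *\<^sub>R b) + z w"
  obtain \<xi> where xi: "0 < \<xi>" "\<xi> < h"
    "(z (w + h *\<^sub>R a + h *\<^sub>R b) - z (w + h *\<^sub>R a)) - (z (w + 0 *\<^sub>R a + h *\<^sub>R b) - z (w + 0 *\<^sub>R a))
       = (h - 0) * (Zx (w + \<xi> *\<^sub>R a + h *\<^sub>R b) - Zx (w + \<xi> *\<^sub>R a))"
  proof -
    have "\<exists>\<xi>. 0 < \<xi> \<and> \<xi> < h \<and> (\<lambda>x. z (w + h *\<^sub>R b + x *\<^sub>R a) - z (w + x *\<^sub>R a)) h - (\<lambda>x. z (w + h *\<^sub>R b + x *\<^sub>R a) - z (w + x *\<^sub>R a)) 0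
       = (h - 0) * (\<lambda>x. Zx (w + x *\<^sub>R a + h *\<^sub>R b) - Zx (w + x *\<^sub>R a)) \<xi>"
    proof (rule MVT2[OF h0])
      fix x assume x: "0 \<le> x" "x \<le> h"
      have 1: "((\<lambda>s. z (w + h *\<^sub>R b + s *\<^sub>R a)) has_real_derivative Zx (w + x *\<^sub>R a + h *\<^sub>R b)) (at x)"
        by (rule line_deriv) (use zx[OF inW[OF x, of h]] h0 in \<open>simp add: algebra_simps\<close>)
      have 2: "((\<lambda>s. z (w + s *\<^sub>R a)) has_real_derivative Zx (w + x *\<^sub>R a)) (at x)"
        by (rule line_deriv) (use zx[OF inW[OF x, of 0]] h0 in \<open>simp add: algebra_simps\<close>)
      show "((\<lambda>x. z (w + h *\<^sub>R b + x *\<^sub>R a) - z (w + x *\<^sub>R a)) has_real_derivative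
          (\<lambda>x. Zx (w + x *\<^sub>R a + h *\<^sub>R b) - Zx (w + x *\<^sub>R a)) x) (at x)"
        using DERIV_diff[OF 1 2] by simp
    qed
    then show ?thesis using that by (auto simp: algebra_simps)
  qed
  obtain \<eta> where eta: "0 < \<eta>" "\<eta> < h"
    "Zx (w + \<xi> *\<^sub>R a + h *\<^sub>R b) - Zx (w + \<xi> *\<^sub>R a) = (h - 0) * Zxy (w + \<xi> *\<^sub>R a + \<eta> *\<^sub>R b)"
  proof -
    have "\<exists>\<eta>. 0 < \<eta> \<and> \<eta> < h \<and> (\<lambda>y. Zx (w + \<xi> *\<^sub>R a + y *\<^sub>R b)) h - (\<lambda>y. Zx (w + \<xi> *\<^sub>R a + y *\<^sub>R b)) 0
       = (h - 0) * (\<lambda>y. Zxy (w + \<xi> *\<^sub>R a + y *\<^sub>R b)) \<eta>"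
    proof (rule MVT2[OF h0])
      fix y assume y: "0 \<le> y" "y \<le> h"
      show "((\<lambda>y. Zx (w + \<xi> *\<^sub>R a + y *\<^sub>R b)) has_real_derivative Zxy (w + \<xi> *\<^sub>R a + y *\<^sub>R b)) (at y)"
        by (rule line_deriv) (use zxy[OF inW[of \<xi> y]] xi y in simp)
    qed
    then show ?thesis using that by auto
  qed
  have D1: "D = h * h * Zxy (w + \<xi> *\<^sub>R a + \<eta> *\<^sub>R b)"
    using xi(3) eta(3) by (simp add: D_def algebra_simps)
  obtain \<xi>' where xi': "0 < \<xi>'" "\<xi>' < h"
    "(z (w + h *\<^sub>R b + h *\<^sub>R a) - z (w + h *\<^sub>R b)) - (z (w + 0 *\<^sub>R b + h *\<^sub>R a) - z (w + 0 *\<^sub>R b))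
       = (h - 0) * (Zy (w + h *\<^sub>R a + \<xi>' *\<^sub>R b) - Zy (w + \<xi>' *\<^sub>R b))"
  proof -
    have "\<exists>\<xi>. 0 < \<xi> \<and> \<xi> < h \<and> (\<lambda>x. z (w + h *\<^sub>R a + x *\<^sub>R b) - z (w + x *\<^sub>R b)) h - (\<lambda>x. z (w + h *\<^sub>R a + x *\<^sub>R b) - z (w + x *\<^sub>R b)) 0
       = (h - 0) * (\<lambda>x. Zy (w + h *\<^sub>R a + x *\<^sub>R b) - Zy (w + x *\<^sub>R b)) \<xi>"
    proof (rule MVT2[OF h0])
      fix x assume x: "0 \<le> x" "x \<le> h"
      have 1: "((\<lambda>s. z (w + h *\<^sub>R a + s *\<^sub>R b)) has_real_derivative Zy (w + h *\<^sub>R a + x *\<^sub>R b)) (at x)"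
        by (rule line_deriv) (use zy[OF inW[of h x]] x h0 in simp)
      have 2: "((\<lambda>s. z (w + s *\<^sub>R b)) has_real_derivative Zy (w + x *\<^sub>R b)) (at x)"
        by (rule line_deriv) (use zy[OF inW[of 0 x]] x h0 in simp)
      show "((\<lambda>x. z (w + h *\<^sub>R a + x *\<^sub>R b) - z (w + x *\<^sub>R b)) has_real_derivative
          (\<lambda>x. Zy (w + h *\<^sub>R a + x *\<^sub>R b) - Zy (w + x *\<^sub>R b)) x) (at x)"
        using DERIV_diff[OF 1 2] by simp
    qed
    then show ?thesis using that by (auto simp: algebra_simps)
  qed
  obtain \<eta>' where eta': "0 < \<eta>'" "\<eta>' < h"
    "Zy (w + h *\<^sub>R a + \<xi>' *\<^sub>R b) - Zy (w + \<xi>' *\<^sub>R b) = (h - 0) * Zyx (w + \<eta>' *\<^sub>R a + \<xi>' *\<^sub>R b)"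
  proof -
    have "\<exists>\<eta>. 0 < \<eta> \<and> \<eta> < h \<and> (\<lambda>y. Zy (w + \<xi>' *\<^sub>R b + y *\<^sub>R a)) h - (\<lambda>y. Zy (w + \<xi>' *\<^sub>R b + y *\<^sub>R a)) 0
       = (h - 0) * (\<lambda>y. Zyx (w + y *\<^sub>R a + \<xi>' *\<^sub>R b)) \<eta>"
    proof (rule MVT2[OF h0])
      fix y assume y: "0 \<le> y" "y \<le> h"
      show "((\<lambda>y. Zy (w + \<xi>' *\<^sub>R b + y *\<^sub>R a)) has_real_derivative Zyx (w + y *\<^sub>R a + \<xi>' *\<^sub>R b)) (at y)"
        by (rule line_deriv) (use zyx[OF inW[of y \<xi>']] xi' y in \<open>simp add: algebra_simps\<close>)
    qed
    then show ?thesis using that by (auto simp: algebra_simps)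
  qed
  have D2: "D = h * h * Zyx (w + \<eta>' *\<^sub>R a + \<xi>' *\<^sub>R b)"
    using xi'(3) eta'(3) by (simp add: D_def algebra_simps)
  have eq: "Zxy (w + \<xi> *\<^sub>R a + \<eta> *\<^sub>R b) = Zyx (w + \<eta>' *\<^sub>R a + \<xi>' *\<^sub>R b)"
    using D1 D2 h0 by simp
  have "dist (Zxy (w + \<xi> *\<^sub>R a + \<eta> *\<^sub>R b)) (Zxy w) < e" using cx xi eta by simp
  moreover have "dist (Zyx (w + \<eta>' *\<^sub>R a + \<xi>' *\<^sub>R b)) (Zyx w) < e" using cy xi' eta' by simp
  ultimately have "\<bar>Zxy w - Zyx w\<bar> < 2 * e" using eq by (simp add: dist_real_def)
  then show False by (simp add: e_def)
qed



lemma point_II: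
  fixes G :: "real^3 \<Rightarrow> real^3^3" and X :: "real^2 \<Rightarrow> real^3"
  assumes F: "F > 0" and l: "l > 0"
    and GU: "G (X w) = (\<chi> i j. if i = j then (if i = (3::3) then 1 else F * l) else 0)"
    and DG: "\<And>i j m. pd (\<lambda>v. G v $ j $ m) (X w) (axis i 1) = (if j = m \<and> j \<noteq> 3 then (if i = 1 then F * Lx else if i = 2 then F * Ly else Fp * l) else 0)"
    and X1: "pd X w (axis 1 1) = vector [1, 0, p]" and X2: "pd X w (axis 2 1) = vector [0, 1, q]"
    and P11: "pd (\<lambda>w'. pd X w' (axis 1 1)) w (axis 1 1) = vector [0, 0, r]"
    and P12: "pd (\<lambda>w'. pd X w' (axis 2 1)) w (axis 1 1) = vector [0, 0, s]"
    and P21: "pd (\<lambda>w'. pd X w' (axis 1 1)) w (axis 2 1) = vector [0, 0, s]"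
    and P22: "pd (\<lambda>w'. pd X w' (axis 2 1)) w (axis 2 1) = vector [0, 0, t]"
  shows "extrinsic_curvature G X w =
     ((r + (- p * Lx / (2 * l) + q * Ly / (2 * l) - p\<^sup>2 * Fp / F - Fp / 2 * l)) *
      (t + (p * Lx / (2 * l) - q * Ly / (2 * l) - q\<^sup>2 * Fp / F - Fp / 2 * l)) -
      (s - (p * Ly / (2 * l) + q * Lx / (2 * l) + p * q * Fp / F))\<^sup>2) / (F * l + p\<^sup>2 + q\<^sup>2)\<^sup>2"
proof -
  have a: "F * l > 0" using F l by simp
  define c where "c = sqrt (1 + (p\<^sup>2 + q\<^sup>2) / (F * l))"
  have c: "c > 0" unfolding c_def using a by (simp add: add_pos_nonneg)
  have N: "upward_normal G X w = vector [- p / ((F * l) * c), - q / ((F * l) * c), 1 / c]"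
    unfolding upward_normal_def X1 X2 c_def by (rule normal_eq[OF a GU])
  have MI: "matrix_inv (\<chi> i j. if i = j then (if i = (3::3) then 1 else F * l) else 0 :: real^3^3) = (\<chi> i j. if i = j then (if i = 3 then 1 else 1/(F*l)) else 0)"
    using F l by (intro minv_diag) simp
  let ?A = "p * Lx / (2 * l) - q * Ly / (2 * l) - q\<^sup>2 * Fp / F - Fp / 2 * l"
  let ?B = "p * Ly / (2 * l) + q * Lx / (2 * l) + p * q * Fp / F"
  let ?C = "- p * Lx / (2 * l) + q * Ly / (2 * l) - p\<^sup>2 * Fp / F - Fp / 2 * l"
  have II11: "second_ff G X w $ 1 $ 1 = (r + ?C) / c"
    unfolding second_ff_def covd_tangent_def christoffel_def metric_inner_def
    apply (simp add: N X1 X2 P11 P12 P21 P22 DG GU MI inner_vec_def matrix_vector_mult_def sum_3)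
    using F l c apply (simp add: field_simps power2_eq_square)
    done
  have II22: "second_ff G X w $ 2 $ 2 = (t + ?A) / c"
    unfolding second_ff_def covd_tangent_def christoffel_def metric_inner_def
    apply (simp add: N X1 X2 P11 P12 P21 P22 DG GU MI inner_vec_def matrix_vector_mult_def sum_3)
    using F l c apply (simp add: field_simps power2_eq_square)
    done
  have II12: "second_ff G X w $ 1 $ 2 = (s - ?B) / c"
    unfolding second_ff_def covd_tangent_def christoffel_def metric_inner_def
    apply (simp add: N X1 X2 P11 P12 P21 P22 DG GU MI inner_vec_def matrix_vector_mult_def sum_3)
    using F l c apply (simp add: field_simps power2_eq_square)
    done
  have II21: "second_ff G X w $ 2 $ 1 = (s - ?B) / c"
    unfolding second_ff_def covd_tangent_def christoffel_def metric_inner_def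
    apply (simp add: N X1 X2 P11 P12 P21 P22 DG GU MI inner_vec_def matrix_vector_mult_def sum_3)
    using F l c apply (simp add: field_simps power2_eq_square)
    done
  have I: "det (first_ff G X w) = F * l * (F * l + p\<^sup>2 + q\<^sup>2)"
    unfolding first_ff_def metric_inner_def det_2
    by (simp add: X1 X2 GU inner_vec_def matrix_vector_mult_def sum_3 algebra_simps power2_eq_square)
  have c2: "c\<^sup>2 = (F * l + p\<^sup>2 + q\<^sup>2) / (F * l)"
    unfolding c_def using a F l by (simp add: add_pos_nonneg field_simps)
  have pos: "F * l + p\<^sup>2 + q\<^sup>2 > 0" using a by (simp add: add_pos_nonneg)
  have gen: "\<And>x y u D a. c\<^sup>2 = D / a \<Longrightarrow> a > 0 \<Longrightarrow> D > 0 \<Longrightarrow>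
      (x / c * (y / c) - u / c * (u / c)) / (a * D) = (x * y - u\<^sup>2) / D\<^sup>2"
  proof -
    fix x y u D a :: real assume h: "c\<^sup>2 = D / a" "a > 0" "D > 0"
    have "x / c * (y / c) - u / c * (u / c) = (x * y - u\<^sup>2) / c\<^sup>2"
      using c by (simp add: field_simps power2_eq_square)
    also have "\<dots> = (x * y - u\<^sup>2) * a / D" using h by simp
    finally have e: "x / c * (y / c) - u / c * (u / c) = (x * y - u\<^sup>2) * a / D" .
    show "(x / c * (y / c) - u / c * (u / c)) / (a * D) = (x * y - u\<^sup>2) / D\<^sup>2"
      unfolding e using h by (simp add: power2_eq_square)
  qed
  show ?thesis
    unfolding extrinsic_curvature_def I det_2[of "second_ff G X w"] II11 II22 II12 II21
    by (rule gen[OF c2 a pos])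
qed


theorem mainTheorem13:
  fixes W :: "(real^2) set" and lam :: "real^2 \<Rightarrow> real" and f :: "real \<Rightarrow> real"
    and z :: "real^2 \<Rightarrow> real" and K :: "real^2 \<Rightarrow> real"
  assumes "open W"
    and "\<forall>w\<in>W. lam w > 0"
    and "smooth_on W lam"
    and "\<forall>x. f x > 0"
    and "smooth_on UNIV f"
    and "Ck_on 2 W z"
  shows "(\<forall>w\<in>W. extrinsic_curvature (warped_metric lam f) (graph_map z) w = K w)
     \<longleftrightarrow>
     (\<forall>w\<in>W.
        let ex = axis (1::2) (1::real); ey = axis (2::2) (1::real);
            p = pd z w ex; q = pd z w ey;
            r = pd (\<lambda>w'. pd z w' ex) w ex; s = pd (\<lambda>w'. pd z w' ey) w ex;
            t = pd (\<lambda>w'. pd z w' ey) w ey;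
            l = lam w; lx = pd lam w ex; ly = pd lam w ey;
            fz = f (z w); f' = deriv f (z w);
            A = p * lx / (2 * l) - q * ly / (2 * l) - q\<^sup>2 * f' / fz - f' / 2 * l;
            B = p * ly / (2 * l) + q * lx / (2 * l) + p * q * f' / fz;
            C = - p * lx / (2 * l) + q * ly / (2 * l) - p\<^sup>2 * f' / fz - f' / 2 * l;
            E = K w * (fz * l + p\<^sup>2 + q\<^sup>2)\<^sup>2 - A * C + B\<^sup>2
        in A * r + 2 * B * s + C * t + r * t - s\<^sup>2 = E)"
proof -
  note W = assms(1)
  have ck: "Ck_on 2 W z" by (rule assms(6))
  have zd: "\<And>u v. u \<in> W \<Longrightarrow> v \<in> Basis \<Longrightarrow> ((\<lambda>h. z (u + h *\<^sub>R v)) has_vector_derivative pd z u v) (at 0)"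
    using ck unfolding Ck_on_def by (auto dest!: spec[of _ "[]"])
  have zdd: "\<And>u v v'. u \<in> W \<Longrightarrow> v \<in> Basis \<Longrightarrow> v' \<in> Basis \<Longrightarrow>
      ((\<lambda>h. pd z (u + h *\<^sub>R v) v') has_vector_derivative pd (\<lambda>u. pd z u v') u v) (at 0)"
  proof -
    fix u v v' assume h: "u \<in> W" "(v::real^2) \<in> Basis" "(v'::real^2) \<in> Basis"
    show "((\<lambda>h. pd z (u + h *\<^sub>R v) v') has_vector_derivative pd (\<lambda>u. pd z u v') u v) (at 0)"
      using ck h unfolding Ck_on_def by (auto dest!: spec[of _ "[v']"])
  qed
  have zc: "\<And>v v'. v \<in> Basis \<Longrightarrow> v' \<in> Basis \<Longrightarrow> continuous_on W (\<lambda>u. pd (\<lambda>u. pd z u v') u v)"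
  proof -
    fix v v' assume h: "(v::real^2) \<in> Basis" "(v'::real^2) \<in> Basis"
    show "continuous_on W (\<lambda>u. pd (\<lambda>u. pd z u v') u v)"
      using ck h unfolding Ck_on_def by (auto dest!: spec[of _ "[v, v']"])
  qed
  have lamd: "\<And>u v. u \<in> W \<Longrightarrow> v \<in> Basis \<Longrightarrow> ((\<lambda>h. lam (u + h *\<^sub>R v)) has_vector_derivative pd lam u v) (at 0)"
    using assms(3) unfolding smooth_on_def Ck_on_def by (auto dest!: spec[of _ 1] spec[of _ "[]"])
  have fd: "(f has_real_derivative deriv f x) (at x)" for x
  proof -
    have "Ck_on 1 UNIV f" using assms(5) smooth_on_def by blast
    note c = this[unfolded Ck_on_def, THEN conjunct2, rule_format, of "[]" 1 x]
    have "((\<lambda>h. f (x + h *\<^sub>R 1)) has_vector_derivative pd f x 1) (at 0)" using c by simp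
    then have "((\<lambda>h. f (h + x)) has_real_derivative pd f x 1) (at 0)"
      by (simp add: has_real_derivative_iff_has_vector_derivative add.commute)
    then have "(f has_real_derivative pd f x 1) (at x)"
      using DERIV_shift[of f "pd f x 1" 0 x] by simp
    then show ?thesis using DERIV_imp_deriv by metis
  qed
  have b1: "axis (1::2) (1::real) \<in> Basis" and b2: "axis (2::2) (1::real) \<in> Basis" by simp_all
  have pt: "(extrinsic_curvature (warped_metric lam f) (graph_map z) w = K w) \<longleftrightarrow>
     (let ex = axis (1::2) (1::real); ey = axis (2::2) (1::real);
            p = pd z w ex; q = pd z w ey;
            r = pd (\<lambda>w'. pd z w' ex) w ex; s = pd (\<lambda>w'. pd z w' ey) w ex;
            t = pd (\<lambda>w'. pd z w' ey) w ey;
            l = lam w; lx = pd lam w ex; ly = pd lam w ey;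
            fz = f (z w); f' = deriv f (z w);
            A = p * lx / (2 * l) - q * ly / (2 * l) - q\<^sup>2 * f' / fz - f' / 2 * l;
            B = p * ly / (2 * l) + q * lx / (2 * l) + p * q * f' / fz;
            C = - p * lx / (2 * l) + q * ly / (2 * l) - p\<^sup>2 * f' / fz - f' / 2 * l;
            E = K w * (fz * l + p\<^sup>2 + q\<^sup>2)\<^sup>2 - A * C + B\<^sup>2
        in A * r + 2 * B * s + C * t + r * t - s\<^sup>2 = E)" if w: "w \<in> W" for w
  proof -
    let ?ex = "axis (1::2) (1::real)" and ?ey = "axis (2::2) (1::real)"
    define p where "p = pd z w ?ex"
    define q where "q = pd z w ?ey"
    define r where "r = pd (\<lambda>w'. pd z w' ?ex) w ?ex"
    define s where "s = pd (\<lambda>w'. pd z w' ?ey) w ?ex"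
    define t where "t = pd (\<lambda>w'. pd z w' ?ey) w ?ey"
    define l where "l = lam w"
    define Lx where "Lx = pd lam w ?ex"
    define Ly where "Ly = pd lam w ?ey"
    define F where "F = f (z w)"
    define Fp where "Fp = deriv f (z w)"
    have F: "F > 0" using assms(4) by (simp add: F_def)
    have l: "l > 0" using assms(2) w by (simp add: l_def)
    have sym: "pd (\<lambda>w'. pd z w' ?ex) w ?ey = s"
      unfolding s_def
      by (rule clairaut[OF W w zd[OF _ b1] zd[OF _ b2] zdd[OF _ b2 b1] zdd[OF _ b1 b2] zc[OF b2 b1] zc[OF b1 b2]])
    have GU: "warped_metric lam f (graph_map z w) = (\<chi> i j. if i = j then (if i = (3::3) then 1 else F * l) else 0)"
    proof -
      have 1: "vector [graph_map z w $ 1, graph_map z w $ 2] = w"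
        by (simp add: graph_map_def vec_eq_iff forall_2)
      have 2: "graph_map z w $ 3 = z w" by (simp add: graph_map_def)
      show ?thesis unfolding warped_metric_def 1 2 F_def l_def ..
    qed
    have DG: "\<And>i j m. pd (\<lambda>v. warped_metric lam f v $ j $ m) (graph_map z w) (axis i 1) = (if j = m \<and> j \<noteq> 3 then (if i = 1 then F * Lx else if i = 2 then F * Ly else Fp * l) else 0)"
      unfolding F_def Lx_def Ly_def Fp_def l_def
      by (rule pd_metric[OF lamd[OF w b1] lamd[OF w b2] fd])
    have X1: "pd (graph_map z) w ?ex = vector [1, 0, p]"
      using pd_graph[OF zd[OF w b1]] by (simp add: p_def axis_def)
    have X2: "pd (graph_map z) w ?ey = vector [0, 1, q]"
      using pd_graph[OF zd[OF w b2]] by (simp add: q_def axis_def)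
    have P11: "pd (\<lambda>w'. pd (graph_map z) w' ?ex) w ?ex = vector [0, 0, r]"
      unfolding r_def by (rule pd_pd_graph[OF W w zd[OF _ b1] zdd[OF w b1 b1]])
    have P12: "pd (\<lambda>w'. pd (graph_map z) w' ?ey) w ?ex = vector [0, 0, s]"
      unfolding s_def by (rule pd_pd_graph[OF W w zd[OF _ b2] zdd[OF w b1 b2]])
    have P21: "pd (\<lambda>w'. pd (graph_map z) w' ?ex) w ?ey = vector [0, 0, s]"
      unfolding sym[symmetric] by (rule pd_pd_graph[OF W w zd[OF _ b1] zdd[OF w b2 b1]])
    have P22: "pd (\<lambda>w'. pd (graph_map z) w' ?ey) w ?ey = vector [0, 0, t]"
      unfolding t_def by (rule pd_pd_graph[OF W w zd[OF _ b2] zdd[OF w b2 b2]])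
    have KE: "extrinsic_curvature (warped_metric lam f) (graph_map z) w =
     ((r + (- p * Lx / (2 * l) + q * Ly / (2 * l) - p\<^sup>2 * Fp / F - Fp / 2 * l)) *
      (t + (p * Lx / (2 * l) - q * Ly / (2 * l) - q\<^sup>2 * Fp / F - Fp / 2 * l)) -
      (s - (p * Ly / (2 * l) + q * Lx / (2 * l) + p * q * Fp / F))\<^sup>2) / (F * l + p\<^sup>2 + q\<^sup>2)\<^sup>2"
      by (rule point_II[OF F l GU DG X1 X2 P11 P12 P21 P22])
    have D0: "F * l + p\<^sup>2 + q\<^sup>2 > 0" using F l by (simp add: add_pos_nonneg)
    then have D: "(F * l + p\<^sup>2 + q\<^sup>2)\<^sup>2 > 0" by simp
    have gen: "\<And>A B C E D::real. D > 0 \<Longrightarrow> (((r + C) * (t + A) - (s - B)\<^sup>2) / D = E) \<longleftrightarrow>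
        (A * r + 2 * B * s + C * t + r * t - s\<^sup>2 = E * D - A * C + B\<^sup>2)"
    proof -
      fix A B C E D :: real assume "D > 0"
      then have "(((r + C) * (t + A) - (s - B)\<^sup>2) / D = E) \<longleftrightarrow> ((r + C) * (t + A) - (s - B)\<^sup>2 = E * D)"
        by (simp add: field_simps)
      also have "\<dots> \<longleftrightarrow> (A * r + 2 * B * s + C * t + r * t - s\<^sup>2 = E * D - A * C + B\<^sup>2)"
        by (simp add: algebra_simps power2_eq_square)
      finally show "(((r + C) * (t + A) - (s - B)\<^sup>2) / D = E) \<longleftrightarrow>
        (A * r + 2 * B * s + C * t + r * t - s\<^sup>2 = E * D - A * C + B\<^sup>2)" .
    qed
    show ?thesis
      unfolding Let_def KE p_def[symmetric] q_def[symmetric] r_def[symmetric] s_def[symmetric] t_def[symmetric]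
        l_def[symmetric] Lx_def[symmetric] Ly_def[symmetric] F_def[symmetric] Fp_def[symmetric]
      by (rule gen[OF D])
  qed
  show ?thesis by (rule ball_cong[OF refl pt])
qed

end
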